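(* Fix $n\in\mathbb N$ and let $\sigma_n$ be a strictly increasing function on $[0,1]$, twice differentiable on $(0,1)$ with $\sigma_n'>0$, satisfying for every $r\in(0,\infty)$ $$1+\frac{\sigma_n''(\Psi_n(r))\, \Psi_n(r)}{\sigma_n'(\Psi_n(r))} = \frac{2}{n} - \frac{c_n}{n^2\,\Psi_n(r)}\, r^n e^{-r^2/2},\qquad c_n^{-1} = 2^{\frac{n}{2}-1}\Gamma(n/2).$$ Then the function $y\mapsto\sigma_n(y^n)$ is strictly convex on $(0,1)$; equivalently, the function $\tau_n(x)=\sigma_n^{-1}(x)^{1/n}$ is strictly increasing and strictly concave on its domain (the range of $\sigma_n$).
   Context: $\gamma_n$ is the standard Gaussian measure on $\mathbb R^n$ with density $(2\pi)^{-n/2}e^{-|x|^2/2}$, and $\Psi_n(r)=\gamma_n(\{x\in\mathbb R^n:|x|\le r\})$. *)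

theory Defs
  imports "HOL-Analysis.Analysis"
begin

definition gaussian_measure :: "'n::finite itself \<Rightarrow> (real^'n) measure" where
  "gaussian_measure _ = density lborel
     (\<lambda>x. ennreal ((2 * pi) powr (- real CARD('n) / 2) * exp (- (norm x)\<^sup>2 / 2)))"

definition Psi :: "'n::finite itself \<Rightarrow> real \<Rightarrow> real" where
  "Psi T r = measure (gaussian_measure T) {x :: real^'n. norm x \<le> r}"

definition strict_convex_on :: "real set \<Rightarrow> (real \<Rightarrow> real) \<Rightarrow> bool" where
  "strict_convex_on S f \<longleftrightarrow>
     (\<forall>x\<in>S. \<forall>y\<in>S. \<forall>t. x \<noteq> y \<and> 0 < t \<and> t < 1 \<longrightarrow>
        f ((1 - t) * x + t * y) < (1 - t) * f x + t * f y)"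

end

theory Submission
  imports Defs "HOL-Probability.Probability"
begin

lemma sum_sq: "(\<Sum>b\<in>Basis. (x \<bullet> b)\<^sup>2) = (norm (x::'a::euclidean_space))\<^sup>2"
proof -
  have "(norm x)\<^sup>2 = x \<bullet> x" by (rule power2_norm_eq_inner)
  also have "\<dots> = (\<Sum>b\<in>Basis. (x \<bullet> b) * (x \<bullet> b))" by (rule euclidean_inner)
  finally show ?thesis by (simp add: power2_eq_square)
qed
lemma p1: "(1 / sqrt (2 * pi)) ^ n = (2 * pi) powr (- real n / 2)"
proof -
  have "sqrt (2*pi) = (2*pi) powr (1/2)" by (simp add: powr_half_sqrt)
  then have "(1 / sqrt (2 * pi)) ^ n = ((2*pi) powr (-1/2)) ^ n"
    by (simp add: powr_minus_divide)
  also have "\<dots> = (2 * pi) powr (- real n / 2)"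
    by (simp add: powr_realpow[symmetric] powr_powr)
  finally show ?thesis .
qed

lemma std_nn: "(\<integral>\<^sup>+x. ennreal (std_normal_density x) \<partial>lborel) = 1"
proof -
  have "has_bochner_integral lborel (\<lambda>x. std_normal_density x) 1"
    using std_normal_moment_even[of 0] by simp
  then show ?thesis
    by (subst nn_integral_eq_integral) (auto simp: has_bochner_integral_iff)
qed

lemma gauss_total:
  "(\<integral>\<^sup>+x. ennreal ((2 * pi) powr (- real CARD('n) / 2) * exp (- (norm x)\<^sup>2 / 2)) \<partial>(lborel :: (real^'n::finite) measure)) = 1"
proof -
  have eq: "(2 * pi) powr (- real CARD('n) / 2) * exp (- (norm x)\<^sup>2 / 2)
      = (\<Prod>b\<in>(Basis :: (real^'n) set). std_normal_density (x \<bullet> b))" for x :: "real^'n"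
  proof -
    have "(\<Prod>b\<in>(Basis :: (real^'n) set). std_normal_density (x \<bullet> b))
       = (\<Prod>b\<in>(Basis :: (real^'n) set). (1 / sqrt (2 * pi)) * exp (- (x \<bullet> b)\<^sup>2 / 2))"
      by (simp add: std_normal_density_def)
    also have "\<dots> = (1 / sqrt (2 * pi)) ^ card (Basis :: (real^'n) set) * exp (\<Sum>b\<in>(Basis :: (real^'n) set). - (x \<bullet> b)\<^sup>2 / 2)"
      unfolding prod.distrib prod_constant exp_sum[OF finite_Basis] ..
    also have "(\<Sum>b\<in>(Basis :: (real^'n) set). - (x \<bullet> b)\<^sup>2 / 2) = - (\<Sum>b\<in>(Basis :: (real^'n) set). (x \<bullet> b)\<^sup>2) / 2"
      by (simp add: sum_negf sum_divide_distrib)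
    also have "(\<Sum>b\<in>(Basis :: (real^'n) set). (x \<bullet> b)\<^sup>2) = (norm x)\<^sup>2" by (rule sum_sq)
    also have "card (Basis :: (real^'n) set) = CARD('n)" by simp
    also have "(1 / sqrt (2 * pi)) ^ CARD('n) = (2 * pi) powr (- real CARD('n) / 2)" by (rule p1)
    finally show ?thesis by simp
  qed
  have "(\<integral>\<^sup>+x. ennreal ((2 * pi) powr (- real CARD('n) / 2) * exp (- (norm x)\<^sup>2 / 2)) \<partial>(lborel :: (real^'n::finite) measure))
     = (\<integral>\<^sup>+x. (\<Prod>b\<in>(Basis :: (real^'n) set). ennreal (std_normal_density (x \<bullet> b))) \<partial>lborel)"
    by (simp only: eq prod_ennreal normal_density_nonneg)
  also have "\<dots> = (\<Prod>b\<in>(Basis :: (real^'n) set). (\<integral>\<^sup>+x. ennreal (std_normal_density x) \<partial>lborel))"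
    by (rule nn_integral_lborel_prod) auto
  also have "\<dots> = 1" by (simp add: std_nn)
  finally show ?thesis .
qed

lemma G_emeasure:
  assumes "A \<in> sets borel"
  shows "emeasure (gaussian_measure TYPE('n::finite)) A =
    (\<integral>\<^sup>+x\<in>A. ennreal ((2 * pi) powr (- real CARD('n) / 2) * exp (- (norm x)\<^sup>2 / 2)) \<partial>lborel)"
  using assms unfolding gaussian_measure_def by (subst emeasure_density) auto

lemma G_space: "space (gaussian_measure TYPE('n::finite)) = UNIV"
  unfolding gaussian_measure_def by simp

lemma G_sets: "sets (gaussian_measure TYPE('n::finite)) = sets borel"
  unfolding gaussian_measure_def by simp

lemma G_prob: "prob_space (gaussian_measure TYPE('n::finite))"
proof (rule prob_spaceI)
  show "emeasure (gaussian_measure TYPE('n)) (space (gaussian_measure TYPE('n))) = 1"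
    unfolding G_space
  proof -
    have "emeasure (gaussian_measure TYPE('n)) UNIV = (\<integral>\<^sup>+x\<in>UNIV. ennreal ((2 * pi) powr (- real CARD('n) / 2) * exp (- (norm x)\<^sup>2 / 2)) \<partial>(lborel :: (real^'n::finite) measure))"
      by (rule G_emeasure) simp
    then show "emeasure (gaussian_measure TYPE('n)) UNIV = 1" using gauss_total[where 'n='n] by simp
  qed
qed

lemma G_le:
  assumes A: "A \<in> sets borel"
  shows "emeasure (gaussian_measure TYPE('n::finite)) A \<le>
     ennreal ((2 * pi) powr (- real CARD('n) / 2)) * emeasure (lborel :: (real^'n) measure) A"
proof -
  have "emeasure (gaussian_measure TYPE('n::finite)) A =
    (\<integral>\<^sup>+x. ennreal ((2 * pi) powr (- real CARD('n) / 2) * exp (- (norm x)\<^sup>2 / 2)) * indicator A x \<partial>lborel)"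
    using G_emeasure[OF A] by simp
  also have "\<dots> \<le> (\<integral>\<^sup>+x. ennreal ((2 * pi) powr (- real CARD('n) / 2)) * indicator A x \<partial>lborel)"
    by (intro nn_integral_mono mult_right_mono ennreal_leI) auto
  also have "\<dots> = ennreal ((2 * pi) powr (- real CARD('n) / 2)) * emeasure (lborel :: (real^'n) measure) A"
    using A by (simp add: nn_integral_cmult_indicator)
  finally show ?thesis .
qed
lemma Psi_eq: "Psi TYPE('n::finite) r = measure (gaussian_measure TYPE('n)) (cball 0 r)"
  unfolding Psi_def by (simp add: cball_def dist_norm)

lemma G_fin: "emeasure (gaussian_measure TYPE('n::finite)) A \<noteq> \<infinity>"
proof -
  interpret prob_space "gaussian_measure TYPE('n)" by (rule G_prob)
  show ?thesis by simp
qed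

lemma G_meas_le:
  assumes A: "A \<in> sets borel" and fin: "emeasure (lborel :: (real^'n::finite) measure) A \<noteq> \<infinity>"
  shows "measure (gaussian_measure TYPE('n)) A \<le>
     (2 * pi) powr (- real CARD('n) / 2) * measure (lborel :: (real^'n) measure) A"
proof -
  have "ennreal (measure (gaussian_measure TYPE('n)) A) = emeasure (gaussian_measure TYPE('n::finite)) A"
    using G_fin[where 'n='n] by (simp add: emeasure_eq_ennreal_measure)
  also have "\<dots> \<le> ennreal ((2 * pi) powr (- real CARD('n) / 2)) * emeasure (lborel :: (real^'n) measure) A"
    by (rule G_le[OF A])
  also have "\<dots> = ennreal ((2 * pi) powr (- real CARD('n) / 2) * measure (lborel :: (real^'n) measure) A)"
    using fin by (simp add: emeasure_eq_ennreal_measure ennreal_mult)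
  finally show ?thesis by (simp add: ennreal_le_iff)
qed

lemma Psi_diff:
  assumes "0 \<le> s" "s \<le> r"
  shows "0 \<le> Psi TYPE('n::finite) r - Psi TYPE('n) s \<and>
    Psi TYPE('n::finite) r - Psi TYPE('n) s \<le>
      (2 * pi) powr (- real CARD('n) / 2) * unit_ball_vol (real CARD('n)) * (r ^ CARD('n) - s ^ CARD('n))"
proof -
  let ?G = "gaussian_measure TYPE('n)"
  let ?A = "cball (0::real^'n) r - cball 0 s"
  have sub: "cball (0::real^'n) s \<subseteq> cball 0 r" using assms by auto
  have "measure ?G ?A = Psi TYPE('n) r - Psi TYPE('n) s"
    unfolding Psi_eq by (rule measure_Diff) (rule G_fin, auto simp: G_sets sub)
  moreover have "measure (lborel :: (real^'n) measure) ?A = unit_ball_vol (real CARD('n)) * (r ^ CARD('n) - s ^ CARD('n))"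
  proof -
    have "measure (lborel :: (real^'n) measure) ?A = measure lborel (cball (0::real^'n) r) - measure lborel (cball (0::real^'n) s)"
      using assms by (intro measure_Diff) (auto simp: emeasure_cball sub)
    also have "\<dots> = unit_ball_vol (real CARD('n)) * (r ^ CARD('n) - s ^ CARD('n))"
      using assms by (simp add: content_cball algebra_simps)
    finally show ?thesis .
  qed
  moreover have "measure ?G ?A \<le> (2 * pi) powr (- real CARD('n) / 2) * measure (lborel :: (real^'n) measure) ?A"
  proof (rule G_meas_le)
    show "emeasure lborel ?A \<noteq> \<infinity>"
      using emeasure_mono[of ?A "cball (0::real^'n) r" lborel] assms
      by (auto simp: emeasure_cball top_unique)
  qed auto
  ultimately show ?thesis using measure_nonneg[of ?G ?A] by (simp add: mult.assoc)
qed
lemma Psi_lip: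
  assumes "0 \<le> s" "0 \<le> r"
  shows "\<bar>Psi TYPE('n::finite) r - Psi TYPE('n) s\<bar> \<le>
      (2 * pi) powr (- real CARD('n) / 2) * unit_ball_vol (real CARD('n)) * \<bar>r ^ CARD('n) - s ^ CARD('n)\<bar>"
proof (cases "s \<le> r")
  case True
  have "s ^ CARD('n) \<le> r ^ CARD('n)" using True assms by (intro power_mono) auto
  with Psi_diff[OF assms(1) True, where 'n='n] show ?thesis
    by (simp add: abs_of_nonneg)
next
  case False
  have "r ^ CARD('n) \<le> s ^ CARD('n)" using False assms by (intro power_mono) auto
  with False Psi_diff[OF assms(2), of s, where 'n='n] show ?thesis
    by (simp add: abs_of_nonpos abs_minus_commute)
qed

lemma Psi_cont: "continuous_on {0..} (Psi TYPE('n::finite))"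
  unfolding continuous_on_def
proof
  fix r0 :: real assume r0: "r0 \<in> {0..}"
  define K where "K = (2 * pi) powr (- real CARD('n) / 2) * unit_ball_vol (real CARD('n))"
  have "((\<lambda>r. K * \<bar>r ^ CARD('n) - r0 ^ CARD('n)\<bar>) \<longlongrightarrow> K * \<bar>r0 ^ CARD('n) - r0 ^ CARD('n)\<bar>) (at r0 within {0..})"
    by (intro tendsto_intros)
  then have L: "((\<lambda>r. K * \<bar>r ^ CARD('n) - r0 ^ CARD('n)\<bar>) \<longlongrightarrow> 0) (at r0 within {0..})" by simp
  have ev: "eventually (\<lambda>r. \<bar>Psi TYPE('n) r - Psi TYPE('n) r0\<bar> \<le> K * \<bar>r ^ CARD('n) - r0 ^ CARD('n)\<bar>) (at r0 within {0..})"
    unfolding eventually_at_filter using r0 Psi_lip[where 'n='n, of r0] by (intro always_eventually) (auto simp: K_def)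
  have "((\<lambda>r. Psi TYPE('n) r - Psi TYPE('n) r0) \<longlongrightarrow> 0) (at r0 within {0..})"
    by (rule Lim_null_comparison[OF _ L]) (use ev in simp)
  then show "(Psi TYPE('n) \<longlongrightarrow> Psi TYPE('n) r0) (at r0 within {0..})"
    by (simp add: LIM_zero_iff)
qed

lemma Psi_0: "Psi TYPE('n::finite) 0 = 0"
proof -
  have "measure (gaussian_measure TYPE('n)) (cball 0 0) \<le>
     (2 * pi) powr (- real CARD('n) / 2) * measure (lborel :: (real^'n) measure) (cball 0 0)"
    by (rule G_meas_le) (auto simp: emeasure_cball)
  also have "measure (lborel :: (real^'n) measure) (cball 0 0) = 0"
    by (simp add: content_cball)
  finally have "measure (gaussian_measure TYPE('n)) (cball (0::real^'n) 0) \<le> 0" by simp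
  then show ?thesis unfolding Psi_eq using measure_nonneg[of "gaussian_measure TYPE('n)" "cball (0::real^'n) 0"] by linarith
qed

lemma Psi_big:
  assumes "x < 1"
  shows "\<exists>k::nat. x < Psi TYPE('n::finite) (real k)"
proof -
  interpret prob_space "gaussian_measure TYPE('n)" by (rule G_prob)
  have "(\<lambda>i. measure (gaussian_measure TYPE('n)) (cball (0::real^'n) (real i)))
     \<longlonglongrightarrow> measure (gaussian_measure TYPE('n)) (\<Union>i. cball (0::real^'n) (real i))"
  proof (rule Lim_measure_incseq)
    show "incseq (\<lambda>i. cball (0::real^'n) (real i))"
      by (auto simp: incseq_def)
  qed (auto simp: G_sets)
  moreover have "(\<Union>i. cball (0::real^'n) (real i)) = UNIV"
    by (auto simp: real_arch_simple)
  ultimately have "(\<lambda>i. Psi TYPE('n) (real i)) \<longlonglongrightarrow> 1"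
    unfolding Psi_eq using prob_space G_space[where 'n='n] by simp
  from order_tendstoD(1)[OF this assms] show ?thesis
    using eventually_sequentially by (metis order.refl)
qed

lemma Psi_surj:
  assumes "0 < x" "x < 1"
  shows "\<exists>r>0. Psi TYPE('n::finite) r = x"
proof -
  obtain k :: nat where k: "x < Psi TYPE('n) (real k)" using Psi_big[OF assms(2)] by blast
  have "continuous_on {0..real k} (Psi TYPE('n))"
    by (rule continuous_on_subset[OF Psi_cont]) auto
  then obtain r where r: "0 \<le> r" "r \<le> real k" "Psi TYPE('n) r = x"
    using IVT'[of "Psi TYPE('n)" 0 x "real k"] k assms by (auto simp: Psi_0)
  with assms Psi_0[where 'n='n] have "r \<noteq> 0" by auto
  with r have "r > 0" by auto
  with r show ?thesis by blast
qed
lemma Psi_lower: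
  assumes r: "r > 0"
  shows "Psi TYPE('n::finite) r > (2 * pi) powr (- real CARD('n) / 2) * exp (- r\<^sup>2 / 2) * unit_ball_vol (real CARD('n)) * r ^ CARD('n)"
proof -
  define p where "p = (2 * pi) powr (- real CARD('n) / 2)"
  define a where "a = p * exp (- r\<^sup>2 / 2)"
  define b where "b = p * (exp (- (r/2)\<^sup>2 / 2) - exp (- r\<^sup>2 / 2))"
  define w where "w = unit_ball_vol (real CARD('n))"
  have p: "p > 0" unfolding p_def by simp
  have a: "a \<ge> 0" unfolding a_def using p by simp
  have "(r/2)\<^sup>2 < r\<^sup>2" using r by (simp add: power2_eq_square)
  then have b: "b > 0" unfolding b_def using p by simp
  have w: "w > 0" unfolding w_def by simp
  have pw: "a * indicator (cball (0::real^'n) r) x + b * indicator (ball (0::real^'n) (r/2)) x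
      \<le> (p * exp (- (norm x)\<^sup>2 / 2)) * indicator (cball 0 r) x" for x :: "real^'n"
  proof (cases "norm x \<le> r")
    case True
    then have "(norm x)\<^sup>2 \<le> r\<^sup>2" by (intro power_mono) auto
    then have e1: "exp (- r\<^sup>2 / 2) \<le> exp (- (norm x)\<^sup>2 / 2)" by simp
    show ?thesis
    proof (cases "norm x < r/2")
      case True2: True
      then have "(norm x)\<^sup>2 \<le> (r/2)\<^sup>2" by (intro power_mono) auto
      then have "exp (- (r/2)\<^sup>2 / 2) \<le> exp (- (norm x)\<^sup>2 / 2)" by simp
      then show ?thesis using True True2 p by (simp add: a_def b_def algebra_simps dist_norm)
    next
      case False
      then show ?thesis using True p e1 by (simp add: a_def dist_norm)
    qed
  next
    case False
    then have "x \<notin> ball 0 (r/2)" using r by (auto simp: dist_norm)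
    with False show ?thesis by (simp add: dist_norm)
  qed
  have "ennreal (a * w * r ^ CARD('n) + b * w * (r/2) ^ CARD('n))
      = ennreal a * emeasure lborel (cball (0::real^'n) r) + ennreal b * emeasure lborel (ball (0::real^'n) (r/2))"
    using r a b w by (simp add: emeasure_cball emeasure_ball w_def ennreal_plus ennreal_mult mult.assoc)
  also have "\<dots> = (\<integral>\<^sup>+x. ennreal a * indicator (cball (0::real^'n) r) x + ennreal b * indicator (ball (0::real^'n) (r/2)) x \<partial>lborel)"
  proof -
    have [measurable]: "cball (0::real^'n) r \<in> sets borel" "ball (0::real^'n) (r/2) \<in> sets borel" by auto
    show ?thesis
      apply (subst nn_integral_add)
        apply measurable
      apply (simp add: nn_integral_cmult_indicator)
      done
  qed
  also have "\<dots> = (\<integral>\<^sup>+x. ennreal (a * indicator (cball (0::real^'n) r) x + b * indicator (ball (0::real^'n) (r/2)) x) \<partial>lborel)"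
    using a b by (intro nn_integral_cong) (simp add: ennreal_plus ennreal_mult ennreal_indicator)
  also have "\<dots> \<le> (\<integral>\<^sup>+x. ennreal ((p * exp (- (norm x)\<^sup>2 / 2)) * indicator (cball (0::real^'n) r) x) \<partial>lborel)"
    by (rule nn_integral_mono) (rule ennreal_leI[OF pw])
  also have "\<dots> = emeasure (gaussian_measure TYPE('n)) (cball 0 r)"
    by (subst G_emeasure) (auto simp: p_def ennreal_mult ennreal_indicator intro!: nn_integral_cong)
  also have "\<dots> = ennreal (Psi TYPE('n) r)"
    unfolding Psi_eq using G_fin[where 'n='n] by (simp add: emeasure_eq_ennreal_measure)
  finally have "a * w * r ^ CARD('n) + b * w * (r/2) ^ CARD('n) \<le> Psi TYPE('n) r"
    by (subst (asm) ennreal_le_iff) (auto simp: Psi_eq)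
  moreover have "b * w * (r/2) ^ CARD('n) > 0" using b w r by simp
  ultimately show ?thesis by (simp add: a_def p_def w_def algebra_simps)
qed
lemma const_eq:
  assumes n: "n > 0"
  shows "real n * ((2*pi) powr (- real n / 2) * unit_ball_vol (real n)) = 1 / (2 powr (real n / 2 - 1) * Gamma (real n / 2))"
proof -
  have g: "Gamma (real n / 2 + 1) = (real n / 2) * Gamma (real n / 2)"
    using n by (intro Gamma_plus1) (auto simp: nonpos_Ints_def)
  have gp: "Gamma (real n / 2) > 0" using n by (intro Gamma_real_pos) auto
  have pp: "(2*pi) powr (- real n / 2) * pi powr (real n / 2) = 2 powr (- real n / 2)"
    by (simp add: powr_mult powr_minus field_simps)
  have two: "2 powr (real n / 2 - 1) * 2 powr (- real n / 2) = 1/2"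
  proof -
    have "2 powr (real n / 2 - 1) * 2 powr (- real n / 2) = 2 powr (real n / 2 - 1 + (- real n / 2))"
      by (rule powr_add[symmetric])
    also have "real n / 2 - 1 + (- real n / 2) = -1" by simp
    finally show ?thesis by (simp add: powr_minus)
  qed
  have "real n * ((2*pi) powr (- real n / 2) * unit_ball_vol (real n))
      = real n * ((2*pi) powr (- real n / 2) * pi powr (real n / 2)) / Gamma (real n / 2 + 1)"
    by (simp add: unit_ball_vol_def)
  also have "\<dots> = 2 * 2 powr (- real n / 2) / Gamma (real n / 2)"
    using n gp by (simp only: pp g) (simp add: field_simps)
  also have "\<dots> = 1 / (2 powr (real n / 2 - 1) * Gamma (real n / 2))"
    using gp two by (simp add: field_simps)
  finally show ?thesis .
qed


lemma sc_aux:
  fixes g g' :: "real \<Rightarrow> real"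
  assumes d: "\<And>y. y \<in> {0<..<1} \<Longrightarrow> (g has_real_derivative g' y) (at y)"
    and mono: "\<And>a b. 0 < a \<Longrightarrow> a < b \<Longrightarrow> b < 1 \<Longrightarrow> g' a < g' b"
    and xy: "0 < x" "x < y" "y < 1" and t: "0 < t" "t < 1"
  shows "g ((1 - t) * x + t * y) < (1 - t) * g x + t * g y"
proof -
  define z where "z = (1 - t) * x + t * y"
  have zx: "z - x = t * (y - x)" unfolding z_def by (simp add: algebra_simps)
  have yz: "y - z = (1 - t) * (y - x)" unfolding z_def by (simp add: algebra_simps)
  have "0 < t * (y - x)" using t xy by simp
  then have xz: "x < z" using zx by simp
  have "0 < (1 - t) * (y - x)" using t xy by simp
  then have zy: "z < y" using yz by simp
  obtain \<xi>1 where \<xi>1: "x < \<xi>1" "\<xi>1 < z" "g z - g x = (z - x) * g' \<xi>1"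
    using MVT2[of x z g g'] xz d xy zy by force
  obtain \<xi>2 where \<xi>2: "z < \<xi>2" "\<xi>2 < y" "g y - g z = (y - z) * g' \<xi>2"
    using MVT2[of z y g g'] xz d xy zy by force
  have lt: "g' \<xi>1 < g' \<xi>2" using mono[of \<xi>1 \<xi>2] \<xi>1 \<xi>2 xy by linarith
  have pos: "0 < (1 - t) * t * (y - x)" using t xy by simp
  have "(1 - t) * (g z - g x) = ((1 - t) * t * (y - x)) * g' \<xi>1" using \<xi>1(3) zx by simp
  also have "\<dots> < ((1 - t) * t * (y - x)) * g' \<xi>2" using lt pos by (rule mult_strict_left_mono)
  also have "\<dots> = t * (g y - g z)" using \<xi>2(3) yz by simp
  finally have "(1 - t) * (g z - g x) < t * (g y - g z)" .
  then show ?thesis unfolding z_def[symmetric] by (simp add: algebra_simps)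
qed

lemma sc_from_deriv:
  fixes g g' :: "real \<Rightarrow> real"
  assumes d: "\<And>y. y \<in> {0<..<1} \<Longrightarrow> (g has_real_derivative g' y) (at y)"
    and mono: "\<And>a b. 0 < a \<Longrightarrow> a < b \<Longrightarrow> b < 1 \<Longrightarrow> g' a < g' b"
  shows "strict_convex_on {0<..<1} g"
  unfolding strict_convex_on_def
proof (intro ballI allI impI)
  fix x y :: real and t :: real assume x: "x \<in> {0<..<1}" and y: "y \<in> {0<..<1}" and h: "x \<noteq> y \<and> 0 < t \<and> t < 1"
  show "g ((1 - t) * x + t * y) < (1 - t) * g x + t * g y"
  proof (cases "x < y")
    case True
    then show ?thesis using sc_aux[OF d mono, of x y t] x y h by auto
  next
    case False
    then have "y < x" using h by auto
    then have "g ((1 - (1 - t)) * y + (1 - t) * x) < (1 - (1 - t)) * g y + (1 - t) * g x"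
      using sc_aux[OF d mono, of y x "1 - t"] x y h by auto
    then show ?thesis by (simp add: algebra_simps)
  qed
qed

lemma deriv_pos_mono:
  fixes h h' :: "real \<Rightarrow> real"
  assumes d: "\<And>y. y \<in> {0<..<1} \<Longrightarrow> (h has_real_derivative h' y) (at y)"
    and p: "\<And>y. y \<in> {0<..<1} \<Longrightarrow> h' y > 0"
    and ab: "0 < a" "a < b" "b < 1"
  shows "h a < h b"
proof -
  obtain z where z: "a < z" "z < b" "h b - h a = (b - a) * h' z"
    using MVT2[of a b h h'] d ab by force
  have "h' z > 0" using p z ab by auto
  then have "(b - a) * h' z > 0" using ab by simp
  then show ?thesis using z by linarith
qed

lemma calc_main:
  fixes \<sigma> \<sigma>' \<sigma>'' :: "real \<Rightarrow> real" and n :: nat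
  assumes n: "n > 0"
    and d1: "\<And>x. x \<in> {0<..<1} \<Longrightarrow> (\<sigma> has_real_derivative \<sigma>' x) (at x)"
    and d2: "\<And>x. x \<in> {0<..<1} \<Longrightarrow> (\<sigma>' has_real_derivative \<sigma>'' x) (at x)"
    and pos: "\<And>x. x \<in> {0<..<1} \<Longrightarrow> \<sigma>' x > 0"
    and key: "\<And>x. x \<in> {0<..<1} \<Longrightarrow> real n * x * \<sigma>'' x / \<sigma>' x + (real n - 1) > 0"
  shows "strict_convex_on {0<..<1} (\<lambda>y. \<sigma> (y ^ n))"
proof -
  have yn: "y ^ n \<in> {0<..<1}" if "y \<in> {0<..<1}" for y :: real
    using that n power_strict_mono[of y 1 n] by auto
  define g' where "g' y = \<sigma>' (y ^ n) * (real n * y ^ (n - Suc 0))" for y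
  define g'' where "g'' y = \<sigma>' (y ^ n) * (real n * (real (n - Suc 0) * y ^ (n - Suc 0 - Suc 0)))
      + \<sigma>'' (y ^ n) * (real n * y ^ (n - Suc 0)) * (real n * y ^ (n - Suc 0))" for y
  have dg: "((\<lambda>y. \<sigma> (y ^ n)) has_real_derivative g' y) (at y)" if "y \<in> {0<..<1}" for y
    unfolding g'_def
    by (rule DERIV_chain2[where g="\<lambda>y. y ^ n", OF d1[OF yn[OF that]] DERIV_pow])
  have dg': "(g' has_real_derivative g'' y) (at y)" if "y \<in> {0<..<1}" for y
  proof -
    have A: "((\<lambda>y. \<sigma>' (y ^ n)) has_real_derivative \<sigma>'' (y ^ n) * (real n * y ^ (n - Suc 0))) (at y)"
      by (rule DERIV_chain2[where g="\<lambda>y. y ^ n", OF d2[OF yn[OF that]] DERIV_pow])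
    have B: "((\<lambda>y. real n * y ^ (n - Suc 0)) has_real_derivative real n * (real (n - Suc 0) * y ^ (n - Suc 0 - Suc 0))) (at y)"
      by (rule DERIV_cmult[OF DERIV_pow])
    show ?thesis unfolding g'_def g''_def using DERIV_mult'[OF A B] by simp
  qed
  have g''pos: "g'' y > 0" if y: "y \<in> {0<..<1}" for y
  proof -
    let ?x = "y ^ n"
    have x: "?x \<in> {0<..<1}" by (rule yn[OF y])
    have y0: "y > 0" using y by auto
    have s: "\<sigma>' ?x > 0" using pos[OF x] .
    have e1: "y ^ (n - Suc 0) * y = ?x" using n by (metis Suc_pred power_Suc2)
    have e2: "real (n - Suc 0) * y ^ (n - Suc 0 - Suc 0) * y\<^sup>2 = (real n - 1) * ?x"
    proof (cases "n = 1")
      case True then show ?thesis by simp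
    next
      case False
      then have "n - Suc 0 - Suc 0 + 2 = n" using n by simp
      then have "y ^ (n - Suc 0 - Suc 0) * y\<^sup>2 = ?x" by (metis power_add)
      then show ?thesis using False n by (simp add: of_nat_diff mult.assoc)
    qed
    have "y\<^sup>2 * g'' y = \<sigma>'' ?x * (real n)\<^sup>2 * (y ^ (n - Suc 0) * y) * (y ^ (n - Suc 0) * y)
        + \<sigma>' ?x * real n * (real (n - Suc 0) * y ^ (n - Suc 0 - Suc 0) * y\<^sup>2)"
      unfolding g''_def by (simp add: algebra_simps power2_eq_square)
    also have "\<dots> = real n * ?x * \<sigma>' ?x * (real n * ?x * \<sigma>'' ?x / \<sigma>' ?x + (real n - 1))"
      using s unfolding e1 e2 by (simp add: field_simps power2_eq_square)
    finally have eq: "y\<^sup>2 * g'' y = real n * ?x * \<sigma>' ?x * (real n * ?x * \<sigma>'' ?x / \<sigma>' ?x + (real n - 1))" .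
    have "real n * ?x * \<sigma>' ?x * (real n * ?x * \<sigma>'' ?x / \<sigma>' ?x + (real n - 1)) > 0"
      using key[OF x] s x n by (intro mult_pos_pos) auto
    then have "y\<^sup>2 * g'' y > 0" using eq by simp
    then show ?thesis using y0 by (simp add: zero_less_mult_iff)
  qed
  show ?thesis
  proof (rule sc_from_deriv[OF dg])
    fix a b :: real assume "0 < a" "a < b" "b < 1"
    then show "g' a < g' b" using deriv_pos_mono[of g' g'' a b] dg' g''pos by blast
  qed
qed

theorem mainTheorem5:
  fixes \<sigma> \<sigma>' \<sigma>'' :: "real \<Rightarrow> real"
  defines "n \<equiv> CARD('n::finite)"
  defines "c \<equiv> 1 / (2 powr (real n / 2 - 1) * Gamma (real n / 2))"
  assumes incr: "strict_mono_on {0..1} \<sigma>"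
    and d1: "\<And>x. x \<in> {0<..<1} \<Longrightarrow> (\<sigma> has_real_derivative \<sigma>' x) (at x)"
    and d2: "\<And>x. x \<in> {0<..<1} \<Longrightarrow> (\<sigma>' has_real_derivative \<sigma>'' x) (at x)"
    and pos: "\<And>x. x \<in> {0<..<1} \<Longrightarrow> \<sigma>' x > 0"
    and ode: "\<And>r. r > 0 \<Longrightarrow>
      1 + \<sigma>'' (Psi TYPE('n) r) * Psi TYPE('n) r / \<sigma>' (Psi TYPE('n) r)
        = 2 / real n - c / ((real n)\<^sup>2 * Psi TYPE('n) r) * r ^ n * exp (- r\<^sup>2 / 2)"
  shows "strict_convex_on {0<..<1} (\<lambda>y. \<sigma> (y ^ n))"
proof (rule calc_main[OF _ d1 d2 pos])
  show n0: "n > 0" unfolding n_def by simp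
  fix x :: real assume x: "x \<in> {0<..<1}"
  then obtain r where r: "r > 0" "Psi TYPE('n) r = x" using Psi_surj[of x] by auto
  have e: "1 + \<sigma>'' x * x / \<sigma>' x = 2 / real n - c / ((real n)\<^sup>2 * x) * r ^ n * exp (- r\<^sup>2 / 2)"
    using ode[OF r(1)] r(2) by simp
  have ceq: "c = real n * ((2*pi) powr (- real n / 2) * unit_ball_vol (real n))"
    unfolding c_def using const_eq[OF n0] by simp
  have low: "x > (2 * pi) powr (- real n / 2) * exp (- r\<^sup>2 / 2) * unit_ball_vol (real n) * r ^ n"
    using Psi_lower[OF r(1), where 'n='n] r(2) unfolding n_def by simp
  define q where "q = c * r ^ n * exp (- r\<^sup>2 / 2)"
  have q: "q < real n * x"
  proof -
    have "q = real n * ((2 * pi) powr (- real n / 2) * exp (- r\<^sup>2 / 2) * unit_ball_vol (real n) * r ^ n)"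
      unfolding q_def ceq by (simp add: algebra_simps)
    also have "\<dots> < real n * x" using low n0 by simp
    finally show ?thesis .
  qed
  have sp: "\<sigma>' x > 0" using pos[OF x] .
  have x0: "x > 0" using x by simp
  have "real n * x * \<sigma>'' x / \<sigma>' x + (real n - 1) = real n * (1 + \<sigma>'' x * x / \<sigma>' x) - 1"
    by (simp add: algebra_simps)
  also have "\<dots> = 1 - q / (real n * x)"
    unfolding e q_def using n0 x0 by (simp add: field_simps power2_eq_square)
  also have "\<dots> > 0" using q n0 x0 by (simp add: field_simps)
  finally show "real n * x * \<sigma>'' x / \<sigma>' x + (real n - 1) > 0" .
qed

end
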